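(* Let $M_\varphi$ be a hyperbolic once-punctured torus bundle with $H_1(M_\varphi;\mathbb{Z}_2)\cong\mathbb{Z}_2^3$. Then $X_\varphi(S)$ contains either exactly one or all three of the coordinate axes $L_1,L_2,L_3$ of $X(S)=\mathbb{C}^3$. Moreover, $X_{\varphi^2}(S)$ contains all three lines $L_1,L_2,L_3$.
   Context: $S$ is the once-punctured torus fibre with $\pi_1(S)$ free on $a,b$; $X(S)\cong\mathbb{C}^3$ is its $\mathrm{SL}(2,\mathbb{C})$-character variety with coordinates $(x,y,z)=(\operatorname{tr}\rho(a),\operatorname{tr}\rho(b),\operatorname{tr}\rho(ab))$; $L_1,L_2,L_3$ are the $x$-, $y$- and $z$-axes. For a monodromy $\psi$, $X_\psi(S)$ is the fixed set of the polynomial automorphism of $X(S)$ induced by $\psi$ ($\chi\mapsto\chi\circ\psi$). *)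

theory Defs
  imports "HOL-Analysis.Analysis"
begin

text \<open>Free group F_2 = pi_1(S) on generators a, b; words are lists of letters,
  a letter (g, True) stands for the inverse of g.\<close>

datatype gen = Ga | Gb

type_synonym letter = "gen \<times> bool"

definition inv_letter :: "letter \<Rightarrow> letter" where
  "inv_letter l = (fst l, \<not> snd l)"

definition inv_word :: "letter list \<Rightarrow> letter list" where
  "inv_word w = rev (map inv_letter w)"

fun free_red :: "letter list \<Rightarrow> letter list" where
  "free_red [] = []"
| "free_red (x # xs) =
     (case free_red xs of [] \<Rightarrow> [x]
      | y # ys \<Rightarrow> if y = inv_letter x then ys else x # y # ys)"

type_synonym endo = "gen \<Rightarrow> letter list"

fun subst :: "endo \<Rightarrow> letter list \<Rightarrow> letter list" where
  "subst f [] = []"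
| "subst f ((g, False) # w) = f g @ subst f w"
| "subst f ((g, True) # w) = inv_word (f g) @ subst f w"

definition endo_comp :: "endo \<Rightarrow> endo \<Rightarrow> endo" where
  "endo_comp f g = (\<lambda>x. subst f (g x))"

definition is_aut :: "endo \<Rightarrow> bool" where
  "is_aut f \<longleftrightarrow> (\<exists>g. \<forall>x. free_red (subst f (g x)) = [(x, False)]
                         \<and> free_red (subst g (f x)) = [(x, False)])"

text \<open>Action on H_1(S;Z) = Z^2: exponent sums (abelianization matrix).\<close>
definition exp_sum :: "gen \<Rightarrow> letter list \<Rightarrow> int" where
  "exp_sum g w = (\<Sum>l\<leftarrow>w. if fst l = g then (if snd l then -1 else 1) else 0)"

definition ab11 :: "endo \<Rightarrow> int" where "ab11 f = exp_sum Ga (f Ga)"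
definition ab21 :: "endo \<Rightarrow> int" where "ab21 f = exp_sum Gb (f Ga)"
definition ab12 :: "endo \<Rightarrow> int" where "ab12 f = exp_sum Ga (f Gb)"
definition ab22 :: "endo \<Rightarrow> int" where "ab22 f = exp_sum Gb (f Gb)"

definition ab_trace :: "endo \<Rightarrow> int" where "ab_trace f = ab11 f + ab22 f"
definition ab_det :: "endo \<Rightarrow> int" where "ab_det f = ab11 f * ab22 f - ab12 f * ab21 f"

type_synonym mat2 = "complex^2^2"

fun eval_word :: "(gen \<Rightarrow> mat2) \<Rightarrow> letter list \<Rightarrow> mat2" where
  "eval_word \<rho> [] = mat 1"
| "eval_word \<rho> ((g, False) # w) = \<rho> g ** eval_word \<rho> w"
| "eval_word \<rho> ((g, True) # w) = matrix_inv (\<rho> g) ** eval_word \<rho> w"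

definition is_SL2_rep :: "(gen \<Rightarrow> mat2) \<Rightarrow> bool" where
  "is_SL2_rep \<rho> \<longleftrightarrow> (\<forall>g. det (\<rho> g) = 1)"

definition char_coords :: "(gen \<Rightarrow> mat2) \<Rightarrow> complex \<times> complex \<times> complex" where
  "char_coords \<rho> = (trace (eval_word \<rho> [(Ga, False)]),
                    trace (eval_word \<rho> [(Gb, False)]),
                    trace (eval_word \<rho> [(Ga, False), (Gb, False)]))"

definition fixed_chars :: "endo \<Rightarrow> (complex \<times> complex \<times> complex) set" where
  "fixed_chars f = {char_coords \<rho> | \<rho>. is_SL2_rep \<rho> \<and>
      (\<forall>w. trace (eval_word \<rho> (subst f w)) = trace (eval_word \<rho> w))}"

definition axis :: "nat \<Rightarrow> (complex \<times> complex \<times> complex) set" where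
  "axis i = (if i = 1 then {(x, 0, 0) | x. True}
             else if i = 2 then {(0, y, 0) | y. True}
             else {(0, 0, z) | z. True})"

end

theory Submission
  imports Defs
begin


lemma m2_eq: "(A::mat2) = B \<longleftrightarrow> A$1$1 = B$1$1 \<and> A$1$2 = B$1$2 \<and> A$2$1 = B$2$1 \<and> A$2$2 = B$2$2"
  by (auto simp: vec_eq_iff forall_2)

lemma m2_mult: "((A::mat2) ** (B::mat2))$i$j = A$i$1 * B$1$j + A$i$2 * B$2$j"
  by (simp add: matrix_matrix_mult_def sum_2)

lemma m2_tr: "trace (A::mat2) = A$1$1 + A$2$2"
  by (simp add: trace_def sum_2)

lemma m2_one: "(mat 1 :: mat2)$1$1 = 1" "(mat 1 :: mat2)$2$2 = 1" "(mat 1 :: mat2)$1$2 = 0" "(mat 1 :: mat2)$2$1 = 0"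
  by (simp_all add: mat_def)

definition adj2 :: "mat2 \<Rightarrow> mat2" where
  "adj2 M = vector [vector [M$2$2, - M$1$2], vector [- M$2$1, M$1$1]]"

lemma adj2_simps: "adj2 M $1$1 = M$2$2" "adj2 M $1$2 = - M$1$2" "adj2 M $2$1 = - M$2$1" "adj2 M $2$2 = M$1$1"
  by (simp_all add: adj2_def)

lemma inv2: assumes "det (M::mat2) = 1" shows "matrix_inv M = adj2 M"
proof -
  have r: "M ** adj2 M = mat 1" "adj2 M ** M = mat 1"
    using assms by (simp_all add: m2_eq m2_mult adj2_simps m2_one det_2 algebra_simps)
  show ?thesis unfolding matrix_inv_def
  proof (rule some_equality)
    show "M ** adj2 M = mat 1 \<and> adj2 M ** M = mat 1" using r by simp
  next
    fix A' assume "M ** A' = mat 1 \<and> A' ** M = mat 1"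
    then have "A' = A' ** (M ** adj2 M)" "A' ** M = mat 1" using r by auto
    then show "A' = adj2 M" by (simp add: matrix_mul_assoc)
  qed
qed



type_synonym N = "bool \<times> int \<times> bool"

fun nmul :: "N \<Rightarrow> N \<Rightarrow> N" where
  "nmul (p,m,e) (q,k,f) = ((p \<noteq> (q \<noteq> (e \<and> f))), m + (if e then -k else k), e \<noteq> f)"

fun ninv :: "N \<Rightarrow> N" where
  "ninv (p,m,e) = (if e then (\<not>p, m, True) else (p, -m, False))"

definition n1 :: N where "n1 = (False, 0, False)"

lemma nmul_n1[simp]: "nmul n1 x = x" "nmul x n1 = x"
  by (cases x; auto simp: n1_def)+

lemma nmul_assoc: "nmul (nmul x y) z = nmul x (nmul y z)"
  by (cases x; cases y; cases z) auto

lemma nmul_ninv[simp]: "nmul x (ninv x) = n1" "nmul (ninv x) x = n1"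
  by (cases x; auto simp: n1_def)+

lemma ninv_ninv[simp]: "ninv (ninv x) = x"
  by (cases x) auto

lemma ninv_n1[simp]: "ninv n1 = n1" by (simp add: n1_def)

lemma ninv_nmul: "ninv (nmul x y) = nmul (ninv y) (ninv x)"
  by (cases x; cases y) auto

definition lv :: "(gen \<Rightarrow> N) \<Rightarrow> letter \<Rightarrow> N" where
  "lv \<gamma> l = (if snd l then ninv (\<gamma> (fst l)) else \<gamma> (fst l))"

fun hN :: "(gen \<Rightarrow> N) \<Rightarrow> letter list \<Rightarrow> N" where
  "hN \<gamma> [] = n1"
| "hN \<gamma> (l # w) = nmul (lv \<gamma> l) (hN \<gamma> w)"

lemma hN_append: "hN \<gamma> (u @ w) = nmul (hN \<gamma> u) (hN \<gamma> w)"
  by (induction u) (auto simp: nmul_assoc)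

lemma lv_inv: "lv \<gamma> (inv_letter l) = ninv (lv \<gamma> l)"
  by (simp add: lv_def inv_letter_def)

lemma hN_inv_word: "hN \<gamma> (inv_word u) = ninv (hN \<gamma> u)"
  by (induction u) (auto simp: inv_word_def hN_append lv_inv ninv_nmul)

lemma hN_free_red: "hN \<gamma> (free_red w) = hN \<gamma> w"
proof (induction w)
  case Nil then show ?case by simp
next
  case (Cons x xs)
  show ?case
  proof (cases "free_red xs")
    case Nil then show ?thesis using Cons by simp
  next
    case (Cons y ys)
    then have h: "hN \<gamma> xs = nmul (lv \<gamma> y) (hN \<gamma> ys)" using Cons.IH by simp
    show ?thesis
    proof (cases "y = inv_letter x")
      case True
      then show ?thesis using Cons h by (simp add: lv_inv nmul_assoc[symmetric])
    next
      case False
      then show ?thesis using Cons h by simp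
    qed
  qed
qed

lemma hN_subst: "hN \<gamma> (subst f w) = hN (\<lambda>g. hN \<gamma> (f g)) w"
proof (induction w)
  case Nil then show ?case by simp
next
  case (Cons l w)
  obtain g b where l: "l = (g, b)" by (cases l)
  show ?case using Cons by (cases b) (auto simp: l hN_append hN_inv_word lv_def)
qed

fun th :: "bool \<times> int \<Rightarrow> bool \<times> int \<Rightarrow> N \<Rightarrow> N" where
  "th (pu,nu) (pv,nv) (p,n,e) = (p \<noteq> ((pu \<and> odd n) \<noteq> (e \<and> pv)), nu*n + (if e then nv else 0), e)"

lemma th_mul: "th U V (nmul x y) = nmul (th U V x) (th U V y)"
  by (cases U; cases V; cases x; cases y) (auto simp: algebra_simps)

lemma th_inv: "th U V (ninv x) = ninv (th U V x)"
  by (cases U; cases V; cases x) (auto simp: algebra_simps)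

lemma th_n1: "th U V n1 = n1"
  by (cases U; cases V) (auto simp: n1_def)

lemma hN_th: assumes "\<And>g. \<gamma>' g = th U V (\<gamma> g)"
  shows "hN \<gamma>' w = th U V (hN \<gamma> w)"
  by (induction w) (auto simp: th_n1 th_mul lv_def th_inv assms)



definition ab4 :: "N \<Rightarrow> int" where
  "ab4 x = (case x of (p,n,e) \<Rightarrow> 2 * (if p then 1 else 0) + (if e then 1 else 0))"

definition ab2 :: "N \<Rightarrow> int" where "ab2 x = fst (snd x)"

lemma ab4_mul: "ab4 (nmul x y) mod 4 = (ab4 x + ab4 y) mod 4"
  by (cases x; cases y) (auto simp: ab4_def)

lemma ab4_inv: "ab4 (ninv x) mod 4 = (- ab4 x) mod 4"
  by (cases x) (auto simp: ab4_def)

lemma ab2_mul: "ab2 (nmul x y) mod 2 = (ab2 x + ab2 y) mod 2"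
  by (cases x; cases y) (auto simp: ab2_def; presburger)

lemma ab2_inv: "ab2 (ninv x) mod 2 = (- ab2 x) mod 2"
  by (cases x) (auto simp: ab2_def; presburger)

lemma exp_sum_Nil[simp]: "exp_sum g [] = 0"
  by (simp add: exp_sum_def)

lemma exp_sum_Cons[simp]: "exp_sum g (l # w) = (if fst l = g then (if snd l then -1 else 1) else 0) + exp_sum g w"
  by (simp add: exp_sum_def)

lemma ab4_hN: "ab4 (hN \<gamma> w) mod 4 = (exp_sum Ga w * ab4 (\<gamma> Ga) + exp_sum Gb w * ab4 (\<gamma> Gb)) mod 4"
proof (induction w)
  case Nil then show ?case by (simp add: ab4_def n1_def)
next
  case (Cons l w)
  obtain g b where l: "l = (g, b)" by (cases l)
  have "ab4 (hN \<gamma> (l # w)) mod 4 = (ab4 (lv \<gamma> l) + ab4 (hN \<gamma> w)) mod 4"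
    by (simp add: ab4_mul)
  also have "\<dots> = (ab4 (lv \<gamma> l) + (exp_sum Ga w * ab4 (\<gamma> Ga) + exp_sum Gb w * ab4 (\<gamma> Gb))) mod 4"
    by (metis Cons.IH mod_add_right_eq)
  also have "\<dots> = ((if snd l then - ab4 (\<gamma> (fst l)) else ab4 (\<gamma> (fst l))) + (exp_sum Ga w * ab4 (\<gamma> Ga) + exp_sum Gb w * ab4 (\<gamma> Gb))) mod 4"
    by (rule mod_add_cong) (cases "snd l"; simp add: lv_def ab4_inv)+
  also have "\<dots> = (exp_sum Ga (l # w) * ab4 (\<gamma> Ga) + exp_sum Gb (l # w) * ab4 (\<gamma> Gb)) mod 4"
    by (cases g; cases b) (auto simp: l algebra_simps)
  finally show ?case .
qed

lemma ab2_hN: "ab2 (hN \<gamma> w) mod 2 = (exp_sum Ga w * ab2 (\<gamma> Ga) + exp_sum Gb w * ab2 (\<gamma> Gb)) mod 2"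
proof (induction w)
  case Nil then show ?case by (simp add: ab2_def n1_def)
next
  case (Cons l w)
  obtain g b where l: "l = (g, b)" by (cases l)
  have "ab2 (hN \<gamma> (l # w)) mod 2 = (ab2 (lv \<gamma> l) + ab2 (hN \<gamma> w)) mod 2"
    by (simp add: ab2_mul)
  also have "\<dots> = (ab2 (lv \<gamma> l) + (exp_sum Ga w * ab2 (\<gamma> Ga) + exp_sum Gb w * ab2 (\<gamma> Gb))) mod 2"
    by (metis Cons.IH mod_add_right_eq)
  also have "\<dots> = ((if snd l then - ab2 (\<gamma> (fst l)) else ab2 (\<gamma> (fst l))) + (exp_sum Ga w * ab2 (\<gamma> Ga) + exp_sum Gb w * ab2 (\<gamma> Gb))) mod 2"
    by (rule mod_add_cong) (cases "snd l"; simp add: lv_def ab2_inv)+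
  also have "\<dots> = (exp_sum Ga (l # w) * ab2 (\<gamma> Ga) + exp_sum Gb (l # w) * ab2 (\<gamma> Gb)) mod 2"
    by (cases g; cases b) (auto simp: l algebra_simps)
  finally show ?case .
qed



lemma inv_unique: assumes "det (M::mat2) = 1" "M ** A = mat 1" shows "matrix_inv M = A"
proof -
  have "adj2 M ** M = mat 1" using assms(1) by (simp add: m2_eq m2_mult adj2_simps m2_one det_2 algebra_simps)
  then have "A = adj2 M" by (metis assms(2) matrix_mul_assoc matrix_mul_lid matrix_mul_rid)
  then show ?thesis using inv2[OF assms(1)] by simp
qed

lemma det_adj2: "det (adj2 M) = det M"
  by (simp add: det_2 adj2_simps)

lemma mneg_l: "(- (A::mat2)) ** (B::mat2) = - (A ** B)" by (simp add: m2_eq m2_mult)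
lemma mneg_r: "(A::mat2) ** (- (B::mat2)) = - (A ** B)" by (simp add: m2_eq m2_mult)
lemma tr_neg: "trace (- (A::mat2)) = - trace A" by (simp add: m2_tr)
lemma det_neg: "det (- (A::mat2)) = det A" by (simp add: det_2)

lemma CH0: assumes "det (M::mat2) = 1" "trace M = 0" shows "M ** M = - mat 1"
proof -
  have d: "M$2$2 = - M$1$1" using assms(2) unfolding m2_tr by (simp add: add_eq_0_iff)
  have e: "M$1$1 * M$2$2 - M$1$2 * M$2$1 = 1" using assms(1) by (simp add: det_2)
  show ?thesis using e unfolding m2_eq m2_mult by (simp add: d m2_one) algebra
qed



fun mpow :: "mat2 \<Rightarrow> nat \<Rightarrow> mat2" where
  "mpow A 0 = mat 1"
| "mpow A (Suc k) = A ** mpow A k"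

lemma mpow_add: "mpow A (a + b) = mpow A a ** mpow A b"
  by (induction a) (auto simp: matrix_mul_assoc)

lemma mpow_Suc_right: "mpow A (Suc a) = mpow A a ** A"
  using mpow_add[of A a 1] by simp

lemma mpow_cancel1: assumes "A ** B = mat 1"
  shows "mpow A (Suc a) ** mpow B (Suc b) = mpow A a ** mpow B b"
proof -
  have "mpow A (Suc a) ** mpow B (Suc b) = (mpow A a ** A) ** (B ** mpow B b)"
    by (metis mpow_Suc_right mpow.simps(2))
  also have "\<dots> = mpow A a ** ((A ** B) ** mpow B b)"
    by (simp add: matrix_mul_assoc)
  finally have "mpow A (Suc a) ** mpow B (Suc b) = mpow A a ** ((A ** B) ** mpow B b)" .
  then show ?thesis using assms by simp
qed

lemma mpow_cancel: assumes "A ** B = mat 1"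
  shows "mpow A a ** mpow B b = (if b \<le> a then mpow A (a - b) else mpow B (b - a))"
proof (induction b arbitrary: a)
  case 0 then show ?case by simp
next
  case (Suc b)
  show ?case
  proof (cases a)
    case 0 then show ?thesis by simp
  next
    case (Suc a')
    then show ?thesis using Suc.IH[of a'] mpow_cancel1[OF assms, of a' b] by simp
  qed
qed

lemma mpow_comm: assumes "Q ** A = B ** Q" shows "Q ** mpow A k = mpow B k ** Q"
proof (induction k)
  case 0 then show ?case by simp
next
  case (Suc k)
  have "Q ** mpow A (Suc k) = (Q ** A) ** mpow A k" by (simp add: matrix_mul_assoc)
  also have "\<dots> = B ** (Q ** mpow A k)" using assms by (simp add: matrix_mul_assoc)
  also have "\<dots> = mpow B (Suc k) ** Q" using Suc by (simp add: matrix_mul_assoc)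
  finally show ?case .
qed

lemma det_mpow: assumes "det A = 1" shows "det (mpow A k) = 1"
  by (induction k) (auto simp: det_mul assms)

definition sg :: "bool \<Rightarrow> mat2 \<Rightarrow> mat2" where "sg p M = (if p then - M else M)"

lemma sg_mul: "sg p A ** sg q B = sg (p \<noteq> q) (A ** B)"
  by (auto simp: sg_def mneg_l mneg_r)

locale ax =
  fixes P Q :: mat2
  assumes dP: "det P = 1" and dQ: "det Q = 1" and tQ: "trace Q = 0" and tPQ: "trace (P ** Q) = 0"
begin

definition P' where "P' = matrix_inv P"

lemma PP': "P ** P' = mat 1" "P' ** P = mat 1"
  using dP by (simp_all add: P'_def inv2 m2_eq m2_mult adj2_simps m2_one det_2 algebra_simps)

lemma dP': "det P' = 1" using dP by (simp add: P'_def inv2 det_adj2)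

lemma QQ: "Q ** Q = - mat 1" using CH0[OF dQ tQ] .

lemma PQPQ: "(P ** Q) ** (P ** Q) = - mat 1"
  using CH0[of "P ** Q"] dP dQ tPQ by (simp add: det_mul)

lemma QP: "Q ** P = P' ** Q"
proof -
  have "Q ** P = (P' ** P) ** (Q ** P) ** (Q ** (- Q))"
    using PP' QQ by (simp add: mneg_r)
  also have "\<dots> = P' ** ((P ** Q) ** (P ** Q)) ** (- Q)"
    by (simp add: matrix_mul_assoc)
  also have "\<dots> = P' ** Q" using PQPQ by (simp add: mneg_r mneg_l)
  finally show ?thesis .
qed

lemma QP': "Q ** P' = P ** Q"
proof -
  have "P ** Q = P ** Q ** (P ** P')" using PP' by simp
  also have "\<dots> = P ** (Q ** P) ** P'" by (simp add: matrix_mul_assoc)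
  also have "\<dots> = (P ** P') ** (Q ** P')" using QP by (simp add: matrix_mul_assoc)
  also have "\<dots> = Q ** P'" using PP' by simp
  finally show ?thesis by simp
qed

definition Pz :: "int \<Rightarrow> mat2" where
  "Pz n = (if 0 \<le> n then mpow P (nat n) else mpow P' (nat (- n)))"

lemma Pz_add: "Pz (m + k) = Pz m ** Pz k"
proof (cases "0 \<le> m"; cases "0 \<le> k")
  assume "0 \<le> m" "0 \<le> k" then show ?thesis
    using mpow_add[of P "nat m" "nat k"] by (simp add: Pz_def nat_add_distrib)
next
  assume "\<not> 0 \<le> m" "\<not> 0 \<le> k"
  moreover have "nat (- m - k) = nat (- m) + nat (- k)" using calculation by arith
  ultimately show ?thesis
    using mpow_add[of P' "nat (-m)" "nat (-k)"] by (simp add: Pz_def)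
next
  assume a: "0 \<le> m" "\<not> 0 \<le> k"
  show ?thesis
  proof (cases "0 \<le> m + k")
    case True
    then have "nat (m + k) = nat m - nat (-k)" "nat (-k) \<le> nat m" using a by arith+
    then show ?thesis using a True mpow_cancel[OF PP'(1), of "nat m" "nat (-k)"] by (simp add: Pz_def)
  next
    case False
    then have "nat (- m - k) = nat (-k) - nat m" "\<not> nat (-k) \<le> nat m" using a by arith+
    then show ?thesis using a False mpow_cancel[OF PP'(1), of "nat m" "nat (-k)"] by (simp add: Pz_def)
  qed
next
  assume a: "\<not> 0 \<le> m" "0 \<le> k"
  show ?thesis
  proof (cases "0 < m + k")
    case True
    then have "nat (m + k) = nat k - nat (-m)" "\<not> nat k \<le> nat (-m)" using a by arith+
    then show ?thesis using a True mpow_cancel[OF PP'(2), of "nat (-m)" "nat k"] by (simp add: Pz_def)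
  next
    case False
    then have "nat (- m - k) = nat (-m) - nat k" "nat k \<le> nat (-m)" using a by arith+
    moreover have "m + k = 0 \<Longrightarrow> nat (-m) - nat k = 0" using a by arith
    ultimately show ?thesis using a False mpow_cancel[OF PP'(2), of "nat (-m)" "nat k"]
      by (cases "m + k = 0") (simp_all add: Pz_def)
  qed
qed

lemma Pz0: "Pz 0 = mat 1" by (simp add: Pz_def)
lemma Pz1: "Pz 1 = P" by (simp add: Pz_def)

lemma QPz: "Q ** Pz n = Pz (- n) ** Q"
  using mpow_comm[OF QP] mpow_comm[OF QP'] by (auto simp: Pz_def)

lemma dPz: "det (Pz n) = 1"
  using det_mpow[OF dP] det_mpow[OF dP'] by (simp add: Pz_def)

lemma trPz: "trace (Pz (- n)) = trace (Pz n)"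
proof -
  have "Pz (- n) = - (Q ** Pz n ** Q)"
    using QPz[of n] QQ by (simp add: matrix_mul_assoc[symmetric] mneg_r)
  then have "trace (Pz (- n)) = - trace (Pz n ** Q ** Q)"
    by (metis tr_neg trace_mul_sym matrix_mul_assoc)
  then show ?thesis using QQ by (simp add: matrix_mul_assoc[symmetric] mneg_r tr_neg)
qed

lemma trPzQ: "trace (Pz n ** Q) = 0"
proof -
  have "(Pz n ** Q) ** (Pz n ** Q) = Pz n ** (Q ** Pz n) ** Q" by (simp add: matrix_mul_assoc)
  also have "\<dots> = Pz n ** (Pz (- n) ** Q) ** Q" using QPz[of n] by simp
  also have "\<dots> = (Pz n ** Pz (- n)) ** (Q ** Q)" by (simp add: matrix_mul_assoc)
  also have "\<dots> = - mat 1"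
  proof -
    have h: "Pz n ** Pz (-n) = mat 1" using Pz_add[of n "-n"] Pz0 by simp
    show ?thesis using QQ h by simp
  qed
  finally have "(Pz n ** Q) ** (Pz n ** Q) = - mat 1" .
  moreover have "det (Pz n ** Q) = 1" using dPz dQ by (simp add: det_mul)
  ultimately show ?thesis
    unfolding m2_eq m2_mult m2_tr det_2 by (simp add: m2_one) algebra
qed

end


lemma sg_sg: "sg p (sg q M) = sg (p \<noteq> q) M" by (auto simp: sg_def)
lemma tr_sg: "trace (sg p M) = (if p then - trace M else trace M)" by (simp add: sg_def tr_neg)
lemma det_sg: "det (sg p M) = det M" by (simp add: sg_def det_neg)

context ax begin

fun mo :: "N \<Rightarrow> mat2" where
  "mo (p, n, e) = sg p (Pz n ** (if e then Q else mat 1))"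

lemma core: "(Pz m ** (if e then Q else mat 1)) ** (Pz k ** (if f then Q else mat 1))
   = sg (e \<and> f) (Pz (m + (if e then -k else k)) ** (if e \<noteq> f then Q else mat 1))"
proof (cases e; cases f)
  assume "e" "f"
  have "(Pz m ** Q) ** (Pz k ** Q) = Pz m ** (Q ** Pz k) ** Q" by (simp add: matrix_mul_assoc)
  also have "\<dots> = (Pz m ** Pz (-k)) ** (Q ** Q)" by (simp add: QPz matrix_mul_assoc)
  also have "\<dots> = - Pz (m - k)" using QQ Pz_add[of m "-k"] by (simp add: mneg_r)
  finally show ?thesis using \<open>e\<close> \<open>f\<close> by (simp add: sg_def)
next
  assume "e" "\<not> f"
  have "(Pz m ** Q) ** (Pz k ** mat 1) = Pz m ** (Q ** Pz k)" by (simp add: matrix_mul_assoc)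
  also have "\<dots> = (Pz m ** Pz (-k)) ** Q" by (simp add: QPz matrix_mul_assoc)
  also have "\<dots> = Pz (m - k) ** Q" using Pz_add[of m "-k"] by simp
  finally show ?thesis using \<open>e\<close> \<open>\<not> f\<close> by (simp add: sg_def)
next
  assume "\<not> e" "f"
  then show ?thesis using Pz_add[of m k] by (simp add: sg_def matrix_mul_assoc)
next
  assume "\<not> e" "\<not> f"
  then show ?thesis using Pz_add[of m k] by (simp add: sg_def)
qed

lemma mo_mul: "mo (nmul x y) = mo x ** mo y"
proof -
  obtain p m e where x: "x = (p, m, e)" by (cases x)
  obtain q k f where y: "y = (q, k, f)" by (cases y)
  show ?thesis unfolding x y
    by (simp only: nmul.simps mo.simps sg_mul core sg_sg) (cases p; cases q; cases e; cases f; simp)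
qed

lemma mo_n1: "mo n1 = mat 1" by (simp add: n1_def sg_def Pz0)

lemma det_mo: "det (mo x) = 1"
  by (cases x) (auto simp: det_sg det_mul dPz dQ)

lemma mo_inv: "matrix_inv (mo x) = mo (ninv x)"
  by (rule inv_unique[OF det_mo]) (simp add: mo_mul[symmetric] mo_n1)

lemma eval_mo: assumes "\<And>g. \<rho> g = mo (\<gamma> g)" shows "eval_word \<rho> w = mo (hN \<gamma> w)"
proof (induction w)
  case Nil then show ?case by (simp add: mo_n1)
next
  case (Cons l w)
  obtain g b where l: "l = (g, b)" by (cases l)
  show ?case using Cons by (cases b) (auto simp: l lv_def mo_mul assms mo_inv)
qed

lemma tr_mo: "trace (mo (p, n, e)) = (if e then 0 else if p then - trace (Pz n) else trace (Pz n))"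
  by (auto simp: tr_sg trPzQ)

lemma tr_mo_th: assumes "nu = 1 \<or> nu = -1" "\<not> pu"
  shows "trace (mo (th (pu, nu) V x)) = trace (mo x)"
proof -
  obtain p n e where x: "x = (p, n, e)" by (cases x)
  obtain pv nv where V: "V = (pv, nv)" by (cases V)
  show ?thesis using assms trPz[of n] by (auto simp: x V tr_sg trPzQ)
qed

lemma tr_mo_th2: assumes "nu = 1 \<or> nu = -1"
  shows "trace (mo (th (pu, nu) V (th (pu, nu) V x))) = trace (mo x)"
proof -
  obtain p n e where x: "x = (p, n, e)" by (cases x)
  obtain pv nv where V: "V = (pv, nv)" by (cases V)
  show ?thesis using assms trPz[of n] by (auto simp: x V tr_sg trPzQ)
qed

end


context ax begin

lemma ax_fixed:
  assumes rho: "\<And>g. \<rho> g = mo (\<gamma> g)"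
    and phi: "\<And>g. hN \<gamma> (\<phi> g) = th (pu, nu) V (\<gamma> g)"
    and nu: "nu = 1 \<or> nu = -1"
  shows "\<not> pu \<Longrightarrow> trace (eval_word \<rho> (subst \<phi> w)) = trace (eval_word \<rho> w)"
    and "trace (eval_word \<rho> (subst (endo_comp \<phi> \<phi>) w)) = trace (eval_word \<rho> w)"
    and "pu \<Longrightarrow> hN \<gamma> W = (False, 1, False) \<Longrightarrow> trace (eval_word \<rho> (subst \<phi> W)) = - trace P"
    and "hN \<gamma> W = (False, 1, False) \<Longrightarrow> trace (eval_word \<rho> W) = trace P"
proof -
  have h1: "hN \<gamma> (subst \<phi> w) = th (pu, nu) V (hN \<gamma> w)" for w
    unfolding hN_subst by (rule hN_th) (simp add: phi)
  have h2: "hN \<gamma> (subst (endo_comp \<phi> \<phi>) w) = th (pu, nu) V (th (pu, nu) V (hN \<gamma> w))" for w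
  proof -
    have "hN \<gamma> (subst (endo_comp \<phi> \<phi>) w) = hN (\<lambda>g. hN \<gamma> (subst \<phi> (\<phi> g))) w"
      by (simp add: hN_subst endo_comp_def)
    also have "\<dots> = th (pu, nu) V (hN (\<lambda>g. hN \<gamma> (\<phi> g)) w)"
      by (rule hN_th) (simp add: h1 hN_subst[symmetric])
    also have "\<dots> = th (pu, nu) V (th (pu, nu) V (hN \<gamma> w))"
      using hN_th[of "\<lambda>g. hN \<gamma> (\<phi> g)" "(pu, nu)" V \<gamma> w] phi by simp
    finally show ?thesis .
  qed
  show "\<not> pu \<Longrightarrow> trace (eval_word \<rho> (subst \<phi> w)) = trace (eval_word \<rho> w)"
    using tr_mo_th[OF nu] by (simp add: eval_mo[OF rho] h1)
  show "trace (eval_word \<rho> (subst (endo_comp \<phi> \<phi>) w)) = trace (eval_word \<rho> w)"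
    using tr_mo_th2[OF nu] by (simp add: eval_mo[OF rho] h2)
  show "pu \<Longrightarrow> hN \<gamma> W = (False, 1, False) \<Longrightarrow> trace (eval_word \<rho> (subst \<phi> W)) = - trace P"
    using nu trPz[of 1] by (cases V) (auto simp: eval_mo[OF rho] h1 tr_sg Pz1)
  show "hN \<gamma> W = (False, 1, False) \<Longrightarrow> trace (eval_word \<rho> W) = trace P"
    by (simp add: eval_mo[OF rho] sg_def Pz1)
qed

end

lemma axis_generic:
  fixes L :: "(complex \<times> complex \<times> complex) set"
  assumes phi: "\<And>g. hN \<gamma> (\<phi> g) = th (pu, nu) V (\<gamma> g)"
    and nu: "nu = 1 \<or> nu = -1"
    and W: "hN \<gamma> W = (False, 1, False)"
    and R1: "\<And>\<rho>. is_SL2_rep \<rho> \<Longrightarrow> char_coords \<rho> \<in> L \<Longrightarrow> \<exists>P Q. ax P Q \<and> (\<forall>g. \<rho> g = ax.mo P Q (\<gamma> g))"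
    and R0: "\<exists>pt \<in> L. \<forall>\<rho>. char_coords \<rho> = pt \<longrightarrow> trace (eval_word \<rho> W) = 1"
    and R2: "\<And>pt. pt \<in> L \<Longrightarrow> \<exists>\<rho>. is_SL2_rep \<rho> \<and> char_coords \<rho> = pt"
  shows "L \<subseteq> fixed_chars \<phi> \<longleftrightarrow> \<not> pu"
    and "L \<subseteq> fixed_chars (endo_comp \<phi> \<phi>)"
proof -
  show "L \<subseteq> fixed_chars (endo_comp \<phi> \<phi>)"
  proof
    fix pt assume pt: "pt \<in> L"
    obtain \<rho> where r: "is_SL2_rep \<rho>" "char_coords \<rho> = pt" using R2[OF pt] by blast
    obtain P Q where PQ: "ax P Q" "\<forall>g. \<rho> g = ax.mo P Q (\<gamma> g)" using R1[OF r(1)] r(2) pt by blast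
    have "\<forall>w. trace (eval_word \<rho> (subst (endo_comp \<phi> \<phi>) w)) = trace (eval_word \<rho> w)"
      using ax.ax_fixed(2)[OF PQ(1) _ phi nu] PQ(2) by blast
    then show "pt \<in> fixed_chars (endo_comp \<phi> \<phi>)" unfolding fixed_chars_def using r by blast
  qed
  show "L \<subseteq> fixed_chars \<phi> \<longleftrightarrow> \<not> pu"
  proof
    assume sub: "L \<subseteq> fixed_chars \<phi>"
    show "\<not> pu"
    proof
      assume pu: pu
      obtain pt where pt: "pt \<in> L" "\<forall>\<rho>. char_coords \<rho> = pt \<longrightarrow> trace (eval_word \<rho> W) = 1"
        using R0 by blast
      then obtain \<rho> where r: "char_coords \<rho> = pt" "is_SL2_rep \<rho>"
          "\<forall>w. trace (eval_word \<rho> (subst \<phi> w)) = trace (eval_word \<rho> w)"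
        using sub unfolding fixed_chars_def by blast
      obtain P Q where PQ: "ax P Q" "\<forall>g. \<rho> g = ax.mo P Q (\<gamma> g)" using R1[OF r(2)] r(1) pt by blast
      have a: "trace (eval_word \<rho> (subst \<phi> W)) = - trace P"
        using ax.ax_fixed(3)[OF PQ(1) _ phi nu pu W] PQ(2) by blast
      have b: "trace (eval_word \<rho> W) = trace P"
        using ax.ax_fixed(4)[OF PQ(1) _ phi nu W] PQ(2) by blast
      have "trace (eval_word \<rho> W) = 1" using pt r by blast
      then show False using a b r(3) by (metis add.inverse_inverse one_neq_neg_one)
    qed
  next
    assume npu: "\<not> pu"
    show "L \<subseteq> fixed_chars \<phi>"
    proof
      fix pt assume pt: "pt \<in> L"
      obtain \<rho> where r: "is_SL2_rep \<rho>" "char_coords \<rho> = pt" using R2[OF pt] by blast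
      obtain P Q where PQ: "ax P Q" "\<forall>g. \<rho> g = ax.mo P Q (\<gamma> g)" using R1[OF r(1)] r(2) pt by blast
      have "\<forall>w. trace (eval_word \<rho> (subst \<phi> w)) = trace (eval_word \<rho> w)"
        using ax.ax_fixed(1)[OF PQ(1) _ phi nu npu] PQ(2) by blast
      then show "pt \<in> fixed_chars \<phi>" unfolding fixed_chars_def using r by blast
    qed
  qed
qed



lemma ab4_e: assumes "ab4 x mod 4 = c mod 4"
  shows "snd (snd x) \<longleftrightarrow> odd c" "fst x \<longleftrightarrow> (c mod 4 = 2 \<or> c mod 4 = 3)"
proof -
  obtain p n e where x: "x = (p, n, e)" by (cases x)
  show "snd (snd x) \<longleftrightarrow> odd c" "fst x \<longleftrightarrow> (c mod 4 = 2 \<or> c mod 4 = 3)"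
    using assms by (cases p; cases e; simp add: x ab4_def; presburger)+
qed

lemma nu_unit:
  assumes "\<And>g. hN \<gamma> (\<phi> g) = th (pu, nu) V (\<gamma> g)"
    and "hN \<gamma> (subst \<phi> W) = (False, 1, False)"
  shows "nu = 1 \<or> nu = -1"
proof -
  have "hN \<gamma> (subst \<phi> W) = th (pu, nu) V (hN \<gamma> W)"
    unfolding hN_subst by (rule hN_th) (simp add: assms(1))
  moreover obtain p n e where "hN \<gamma> W = (p, n, e)" by (cases "hN \<gamma> W")
  moreover obtain pv nv where "V = (pv, nv)" by (cases V)
  ultimately have "nu * n = 1" using assms(2) by (auto split: if_splits)
  then show ?thesis by (auto simp: zmult_eq_1_iff)
qed

lemma hN_aut: assumes "is_aut \<phi>" obtains \<psi> where "\<And>x. hN \<gamma> (subst \<phi> (\<psi> x)) = hN \<gamma> [(x, False)]"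
  using assms unfolding is_aut_def by (metis hN_free_red)

definition \<gamma>1 :: "gen \<Rightarrow> N" where "\<gamma>1 g = (case g of Ga \<Rightarrow> (False, 1, False) | Gb \<Rightarrow> (False, 0, True))"
definition \<gamma>2 :: "gen \<Rightarrow> N" where "\<gamma>2 g = (case g of Ga \<Rightarrow> (False, 0, True) | Gb \<Rightarrow> (False, 1, False))"
definition \<gamma>3 :: "gen \<Rightarrow> N" where "\<gamma>3 g = (case g of Ga \<Rightarrow> (False, 0, True) | Gb \<Rightarrow> (True, -1, True))"

lemma axis1_phi:
  assumes aut: "is_aut \<phi>" and ev: "even (ab21 \<phi>)" "odd (ab22 \<phi>)"
  shows "\<exists>pu nu V. (\<forall>g. hN \<gamma>1 (\<phi> g) = th (pu, nu) V (\<gamma>1 g)) \<and> (nu = 1 \<or> nu = -1)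
           \<and> (pu \<longleftrightarrow> ab21 \<phi> mod 4 = 2)"
proof -
  obtain pu nu eu where u: "hN \<gamma>1 (\<phi> Ga) = (pu, nu, eu)" by (cases "hN \<gamma>1 (\<phi> Ga)")
  obtain pv nv ev where v: "hN \<gamma>1 (\<phi> Gb) = (pv, nv, ev)" by (cases "hN \<gamma>1 (\<phi> Gb)")
  have cu: "ab4 (hN \<gamma>1 (\<phi> Ga)) mod 4 = ab21 \<phi> mod 4"
    using ab4_hN[of \<gamma>1 "\<phi> Ga"] by (simp add: \<gamma>1_def ab4_def ab21_def)
  have cv: "ab4 (hN \<gamma>1 (\<phi> Gb)) mod 4 = ab22 \<phi> mod 4"
    using ab4_hN[of \<gamma>1 "\<phi> Gb"] by (simp add: \<gamma>1_def ab4_def ab22_def)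
  have eu: "\<not> eu" and pu: "pu \<longleftrightarrow> ab21 \<phi> mod 4 = 2"
    using ab4_e[OF cu] ev u by (auto, presburger+)
  have evv: "ev" using ab4_e[OF cv] ev v by auto
  have phi: "\<And>g. hN \<gamma>1 (\<phi> g) = th (pu, nu) (pv, nv) (\<gamma>1 g)"
    subgoal for g using u v eu evv by (cases g) (auto simp: \<gamma>1_def)
    done
  obtain \<psi> where psi: "\<And>x. hN \<gamma>1 (subst \<phi> (\<psi> x)) = hN \<gamma>1 [(x, False)]" using hN_aut[OF aut] by blast
  have "nu = 1 \<or> nu = -1"
    by (rule nu_unit[OF phi, of "\<psi> Ga"]) (simp add: psi lv_def \<gamma>1_def)
  then show ?thesis using phi pu by blast
qed

lemma axis2_phi:
  assumes aut: "is_aut \<phi>" and ev: "even (ab12 \<phi>)" "odd (ab11 \<phi>)"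
  shows "\<exists>pu nu V. (\<forall>g. hN \<gamma>2 (\<phi> g) = th (pu, nu) V (\<gamma>2 g)) \<and> (nu = 1 \<or> nu = -1)
           \<and> (pu \<longleftrightarrow> ab12 \<phi> mod 4 = 2)"
proof -
  obtain pu nu eu where u: "hN \<gamma>2 (\<phi> Gb) = (pu, nu, eu)" by (cases "hN \<gamma>2 (\<phi> Gb)")
  obtain pv nv ev where v: "hN \<gamma>2 (\<phi> Ga) = (pv, nv, ev)" by (cases "hN \<gamma>2 (\<phi> Ga)")
  have cu: "ab4 (hN \<gamma>2 (\<phi> Gb)) mod 4 = ab12 \<phi> mod 4"
    using ab4_hN[of \<gamma>2 "\<phi> Gb"] by (simp add: \<gamma>2_def ab4_def ab12_def)
  have cv: "ab4 (hN \<gamma>2 (\<phi> Ga)) mod 4 = ab11 \<phi> mod 4"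
    using ab4_hN[of \<gamma>2 "\<phi> Ga"] by (simp add: \<gamma>2_def ab4_def ab11_def)
  have eu: "\<not> eu" and pu: "pu \<longleftrightarrow> ab12 \<phi> mod 4 = 2"
    using ab4_e[OF cu] ev u by (auto, presburger+)
  have evv: "ev" using ab4_e[OF cv] ev v by auto
  have phi: "\<And>g. hN \<gamma>2 (\<phi> g) = th (pu, nu) (pv, nv) (\<gamma>2 g)"
    subgoal for g using u v eu evv by (cases g) (auto simp: \<gamma>2_def)
    done
  obtain \<psi> where psi: "\<And>x. hN \<gamma>2 (subst \<phi> (\<psi> x)) = hN \<gamma>2 [(x, False)]" using hN_aut[OF aut] by blast
  have "nu = 1 \<or> nu = -1"
    by (rule nu_unit[OF phi, of "\<psi> Gb"]) (simp add: psi lv_def \<gamma>2_def)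
  then show ?thesis using phi pu by blast
qed

lemma subst_append: "subst f (u @ v) = subst f u @ subst f v"
proof (induction u)
  case Nil then show ?case by simp
next
  case (Cons l u)
  obtain g b where l: "l = (g, b)" by (cases l)
  show ?case using Cons by (cases b) (simp_all add: l)
qed

lemma axis3_phi:
  assumes aut: "is_aut \<phi>" and ev: "odd (ab11 \<phi>)" "even (ab12 \<phi>)" "even (ab21 \<phi>)" "odd (ab22 \<phi>)"
  shows "\<exists>pu nu V. (\<forall>g. hN \<gamma>3 (\<phi> g) = th (pu, nu) V (\<gamma>3 g)) \<and> (nu = 1 \<or> nu = -1)
           \<and> (pu \<longleftrightarrow> (ab11 \<phi> + ab12 \<phi> + 3 * ab21 \<phi> + 3 * ab22 \<phi>) mod 4 = 2)"
proof -
  obtain pv nv ev where v: "hN \<gamma>3 (\<phi> Ga) = (pv, nv, ev)" by (cases "hN \<gamma>3 (\<phi> Ga)")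
  obtain pb nb eb where b: "hN \<gamma>3 (\<phi> Gb) = (pb, nb, eb)" by (cases "hN \<gamma>3 (\<phi> Gb)")
  have cv: "ab4 (hN \<gamma>3 (\<phi> Ga)) mod 4 = (ab11 \<phi> + ab21 \<phi> * 3) mod 4"
    using ab4_hN[of \<gamma>3 "\<phi> Ga"] by (simp add: \<gamma>3_def ab4_def ab11_def ab21_def)
  have cb: "ab4 (hN \<gamma>3 (\<phi> Gb)) mod 4 = (ab12 \<phi> + ab22 \<phi> * 3) mod 4"
    using ab4_hN[of \<gamma>3 "\<phi> Gb"] by (simp add: \<gamma>3_def ab4_def ab12_def ab22_def)
  have evv: "ev" and pv: "pv \<longleftrightarrow> (ab11 \<phi> + ab21 \<phi> * 3) mod 4 = 3"
    using ab4_e[OF cv] ev v by (auto, presburger+)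
  have ebb: "eb" and pb: "pb \<longleftrightarrow> (ab12 \<phi> + ab22 \<phi> * 3) mod 4 = 3"
    using ab4_e[OF cb] ev b by (auto, presburger+)
  define pu where "pu = (pv = pb)"
  define nu where "nu = nv - nb"
  have pu: "pu \<longleftrightarrow> (ab11 \<phi> + ab12 \<phi> + 3 * ab21 \<phi> + 3 * ab22 \<phi>) mod 4 = 2"
    unfolding pu_def pv pb using ev by presburger
  have phi: "\<And>g. hN \<gamma>3 (\<phi> g) = th (pu, nu) (pv, nv) (\<gamma>3 g)"
    subgoal for g using v b evv ebb by (cases g) (auto simp: \<gamma>3_def pu_def nu_def)
    done
  obtain \<psi> where psi: "\<And>x. hN \<gamma>3 (subst \<phi> (\<psi> x)) = hN \<gamma>3 [(x, False)]" using hN_aut[OF aut] by blast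
  have "nu = 1 \<or> nu = -1"
    by (rule nu_unit[OF phi, of "\<psi> Ga @ \<psi> Gb"]) (simp add: subst_append hN_append psi lv_def \<gamma>3_def)
  then show ?thesis using phi pu by blast
qed



context ax begin
lemma mo_simps': "mo (False, 1, False) = P" "mo (False, 0, True) = Q"
  "mo (True, -1, True) = - (matrix_inv P ** Q)"
  by (simp_all add: sg_def Pz1 Pz0 Pz_def P'_def)
end

lemma tr1: "trace (eval_word \<rho> [(g, False)]) = trace (\<rho> g)" by simp
lemma tr2: "trace (eval_word \<rho> [(g, False), (h, False)]) = trace (\<rho> g ** \<rho> h)" by simp

lemma cc: "char_coords \<rho> = (trace (\<rho> Ga), trace (\<rho> Gb), trace (\<rho> Ga ** \<rho> Gb))"
  by (simp add: char_coords_def)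

definition mA :: "complex \<Rightarrow> mat2" where "mA x = vector [vector [x, 1], vector [-1, 0]]"
definition mB :: mat2 where "mB = vector [vector [0, \<i>], vector [\<i>, 0]]"
definition mJ :: mat2 where "mJ = vector [vector [0, 1], vector [-1, 0]]"
definition mC :: "complex \<Rightarrow> mat2" where "mC z = vector [vector [\<i>, 0], vector [z, -\<i>]]"

lemma mats: "det (mA x) = 1" "trace (mA x) = x" "det mB = 1" "trace mB = 0"
  "trace (mA x ** mB) = 0" "trace (mB ** mA x) = 0"
  "det mJ = 1" "trace mJ = 0" "det (mC z) = 1" "trace (mC z) = 0" "trace (mJ ** mC z) = z"
  by (simp_all add: mA_def mB_def mJ_def mC_def det_2 m2_tr m2_mult)

lemma axis1_gen:
  assumes "\<And>g. hN \<gamma>1 (\<phi> g) = th (pu, nu) V (\<gamma>1 g)" "nu = 1 \<or> nu = -1"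
  shows "axis 1 \<subseteq> fixed_chars \<phi> \<longleftrightarrow> \<not> pu" "axis 1 \<subseteq> fixed_chars (endo_comp \<phi> \<phi>)"
proof -
  have W: "hN \<gamma>1 [(Ga, False)] = (False, 1, False)" by (simp add: lv_def \<gamma>1_def)
  have R1: "\<exists>P Q. ax P Q \<and> (\<forall>g. \<rho> g = ax.mo P Q (\<gamma>1 g))"
    if "is_SL2_rep \<rho>" "char_coords \<rho> \<in> axis 1" for \<rho>
  proof -
    have a: "ax (\<rho> Ga) (\<rho> Gb)" using that by unfold_locales (auto simp: is_SL2_rep_def cc axis_def)
    have "\<forall>g. \<rho> g = ax.mo (\<rho> Ga) (\<rho> Gb) (\<gamma>1 g)"
      using ax.mo_simps'[OF a] by (auto simp: \<gamma>1_def split: gen.splits)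
    then show ?thesis using a by blast
  qed
  have R0: "\<exists>pt \<in> axis 1. \<forall>\<rho>. char_coords \<rho> = pt \<longrightarrow> trace (eval_word \<rho> [(Ga, False)]) = 1"
    by (rule bexI[of _ "(1, 0, 0)"]) (auto simp: cc axis_def)
  have R2: "\<exists>\<rho>. is_SL2_rep \<rho> \<and> char_coords \<rho> = pt" if ptin: "pt \<in> axis 1" for pt
  proof -
    obtain x where pt: "pt = (x, 0, 0)" using ptin by (auto simp: axis_def)
    let ?\<rho> = "\<lambda>g. case g of Ga \<Rightarrow> mA x | Gb \<Rightarrow> mB"
    have "is_SL2_rep ?\<rho> \<and> char_coords ?\<rho> = pt"
      by (auto simp: is_SL2_rep_def cc pt mats split: gen.splits)
    then show ?thesis by blast
  qed
  show "axis 1 \<subseteq> fixed_chars \<phi> \<longleftrightarrow> \<not> pu" "axis 1 \<subseteq> fixed_chars (endo_comp \<phi> \<phi>)"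
    using axis_generic[OF assms W R1 R0 R2] by blast+
qed

lemma axis2_gen:
  assumes "\<And>g. hN \<gamma>2 (\<phi> g) = th (pu, nu) V (\<gamma>2 g)" "nu = 1 \<or> nu = -1"
  shows "axis 2 \<subseteq> fixed_chars \<phi> \<longleftrightarrow> \<not> pu" "axis 2 \<subseteq> fixed_chars (endo_comp \<phi> \<phi>)"
proof -
  have W: "hN \<gamma>2 [(Gb, False)] = (False, 1, False)" by (simp add: lv_def \<gamma>2_def)
  have R1: "\<exists>P Q. ax P Q \<and> (\<forall>g. \<rho> g = ax.mo P Q (\<gamma>2 g))"
    if "is_SL2_rep \<rho>" "char_coords \<rho> \<in> axis 2" for \<rho>
  proof -
    have a: "ax (\<rho> Gb) (\<rho> Ga)" using that trace_mul_sym[of "\<rho> Ga" "\<rho> Gb"]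
      by unfold_locales (auto simp: is_SL2_rep_def cc axis_def)
    have "\<forall>g. \<rho> g = ax.mo (\<rho> Gb) (\<rho> Ga) (\<gamma>2 g)"
      using ax.mo_simps'[OF a] by (auto simp: \<gamma>2_def split: gen.splits)
    then show ?thesis using a by blast
  qed
  have R0: "\<exists>pt \<in> axis 2. \<forall>\<rho>. char_coords \<rho> = pt \<longrightarrow> trace (eval_word \<rho> [(Gb, False)]) = 1"
    by (rule bexI[of _ "(0, 1, 0)"]) (auto simp: cc axis_def)
  have R2: "\<exists>\<rho>. is_SL2_rep \<rho> \<and> char_coords \<rho> = pt" if ptin: "pt \<in> axis 2" for pt
  proof -
    obtain y where pt: "pt = (0, y, 0)" using ptin by (auto simp: axis_def)
    let ?\<rho> = "\<lambda>g. case g of Ga \<Rightarrow> mB | Gb \<Rightarrow> mA y"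
    have "is_SL2_rep ?\<rho> \<and> char_coords ?\<rho> = pt"
      by (auto simp: is_SL2_rep_def cc pt mats split: gen.splits)
    then show ?thesis by blast
  qed
  show "axis 2 \<subseteq> fixed_chars \<phi> \<longleftrightarrow> \<not> pu" "axis 2 \<subseteq> fixed_chars (endo_comp \<phi> \<phi>)"
    using axis_generic[OF assms W R1 R0 R2] by blast+
qed

lemma ax3_aux:
  assumes "det (A::mat2) = 1" "det B = 1" "trace A = 0" "trace B = 0"
  shows "ax (A ** B) A" "- (matrix_inv (A ** B) ** A) = B"
proof -
  have AA: "A ** A = - mat 1" using CH0 assms by blast
  have BB: "B ** B = - mat 1" using CH0 assms by blast
  have "trace ((A ** B) ** A) = trace (A ** (A ** B))" by (rule trace_mul_sym)
  also have "\<dots> = trace ((A ** A) ** B)" by (simp add: matrix_mul_assoc)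
  also have "\<dots> = 0" using AA assms by (simp add: mneg_l tr_neg)
  finally show "ax (A ** B) A" using assms by unfold_locales (simp_all add: det_mul)
  have "(A ** B) ** (B ** A) = A ** (B ** B) ** A" by (simp add: matrix_mul_assoc)
  also have "\<dots> = mat 1" using AA BB by (simp add: mneg_l mneg_r)
  finally have "matrix_inv (A ** B) = B ** A" using assms by (intro inv_unique) (simp_all add: det_mul)
  then show "- (matrix_inv (A ** B) ** A) = B"
    using AA by (simp add: matrix_mul_assoc[symmetric] mneg_r)
qed

lemma axis3_gen:
  assumes "\<And>g. hN \<gamma>3 (\<phi> g) = th (pu, nu) V (\<gamma>3 g)" "nu = 1 \<or> nu = -1"
  shows "axis 3 \<subseteq> fixed_chars \<phi> \<longleftrightarrow> \<not> pu" "axis 3 \<subseteq> fixed_chars (endo_comp \<phi> \<phi>)"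
proof -
  have W: "hN \<gamma>3 [(Ga, False), (Gb, False)] = (False, 1, False)" by (simp add: lv_def \<gamma>3_def)
  have R1: "\<exists>P Q. ax P Q \<and> (\<forall>g. \<rho> g = ax.mo P Q (\<gamma>3 g))"
    if "is_SL2_rep \<rho>" "char_coords \<rho> \<in> axis 3" for \<rho>
  proof -
    have h: "det (\<rho> Ga) = 1" "det (\<rho> Gb) = 1" "trace (\<rho> Ga) = 0" "trace (\<rho> Gb) = 0"
      using that by (auto simp: is_SL2_rep_def cc axis_def)
    note a = ax3_aux[OF h]
    have "\<forall>g. \<rho> g = ax.mo (\<rho> Ga ** \<rho> Gb) (\<rho> Ga) (\<gamma>3 g)"
      using ax.mo_simps'[OF a(1)] a(2) by (auto simp: \<gamma>3_def split: gen.splits)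
    then show ?thesis using a by blast
  qed
  have R0: "\<exists>pt \<in> axis 3. \<forall>\<rho>. char_coords \<rho> = pt \<longrightarrow> trace (eval_word \<rho> [(Ga, False), (Gb, False)]) = 1"
    by (rule bexI[of _ "(0, 0, 1)"]) (auto simp: cc axis_def)
  have R2: "\<exists>\<rho>. is_SL2_rep \<rho> \<and> char_coords \<rho> = pt" if ptin: "pt \<in> axis 3" for pt
  proof -
    obtain z where pt: "pt = (0, 0, z)" using ptin by (auto simp: axis_def)
    let ?\<rho> = "\<lambda>g. case g of Ga \<Rightarrow> mJ | Gb \<Rightarrow> mC z"
    have "is_SL2_rep ?\<rho> \<and> char_coords ?\<rho> = pt"
      by (auto simp: is_SL2_rep_def cc pt mats split: gen.splits)
    then show ?thesis by blast
  qed
  show "axis 3 \<subseteq> fixed_chars \<phi> \<longleftrightarrow> \<not> pu" "axis 3 \<subseteq> fixed_chars (endo_comp \<phi> \<phi>)"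
    using axis_generic[OF assms W R1 R0 R2] by blast+
qed

lemma sign_rel:
  fixes p q r s :: int
  assumes "p * s - q * r = 1" "odd p" "even q" "even r" "odd s"
  shows "((p + q + 3 * r + 3 * s) mod 4 = 2) \<longleftrightarrow> \<not> ((r mod 4 = 2) \<longleftrightarrow> (q mod 4 = 2))"
proof -
  obtain a where a: "p = 2 * a + 1" using assms(2) by (metis oddE)
  obtain b where b: "q = 2 * b" using assms(3) by blast
  obtain c where c: "r = 2 * c" using assms(4) by blast
  obtain d where d: "s = 2 * d + 1" using assms(5) by (metis oddE)
  have "(2 * a + 1) * (2 * d + 1) - 2 * b * (2 * c) = 1" using assms(1) a b c d by simp
  then have "a + d = 2 * (b * c - a * d)" by (simp add: algebra_simps)
  then have "even (a + d)" by simp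
  then show ?thesis unfolding a b c d by presburger
qed



theorem lemma3p3:
  fixes \<phi> :: endo
  assumes aut: "is_aut \<phi>"
    and orient: "ab_det \<phi> = 1"
    and hyperbolic: "\<bar>ab_trace \<phi>\<bar> > 2"
    and H1_mod2: "even (ab11 \<phi> - 1)" "even (ab12 \<phi>)" "even (ab21 \<phi>)" "even (ab22 \<phi> - 1)"
  shows "card {i \<in> {1, 2, 3::nat}. axis i \<subseteq> fixed_chars \<phi>} \<in> {1, 3}
         \<and> (\<forall>i \<in> {1, 2, 3::nat}. axis i \<subseteq> fixed_chars (endo_comp \<phi> \<phi>))"
proof -
  have o11: "odd (ab11 \<phi>)" and o22: "odd (ab22 \<phi>)" using H1_mod2 by presburger+
  obtain pu1 nu1 V1 where A1: "\<forall>g. hN \<gamma>1 (\<phi> g) = th (pu1, nu1) V1 (\<gamma>1 g)" "nu1 = 1 \<or> nu1 = -1"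
      "pu1 \<longleftrightarrow> ab21 \<phi> mod 4 = 2"
    using axis1_phi[OF aut H1_mod2(3) o22] by blast
  obtain pu2 nu2 V2 where A2: "\<forall>g. hN \<gamma>2 (\<phi> g) = th (pu2, nu2) V2 (\<gamma>2 g)" "nu2 = 1 \<or> nu2 = -1"
      "pu2 \<longleftrightarrow> ab12 \<phi> mod 4 = 2"
    using axis2_phi[OF aut H1_mod2(2) o11] by blast
  obtain pu3 nu3 V3 where A3: "\<forall>g. hN \<gamma>3 (\<phi> g) = th (pu3, nu3) V3 (\<gamma>3 g)" "nu3 = 1 \<or> nu3 = -1"
      "pu3 \<longleftrightarrow> (ab11 \<phi> + ab12 \<phi> + 3 * ab21 \<phi> + 3 * ab22 \<phi>) mod 4 = 2"
    using axis3_phi[OF aut o11 H1_mod2(2,3) o22] by blast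
  note G1 = axis1_gen[of \<phi> pu1 nu1 V1] and G2 = axis2_gen[of \<phi> pu2 nu2 V2]
    and G3 = axis3_gen[of \<phi> pu3 nu3 V3]
  have F1: "axis 1 \<subseteq> fixed_chars \<phi> \<longleftrightarrow> \<not> pu1" "axis 1 \<subseteq> fixed_chars (endo_comp \<phi> \<phi>)"
    using G1 A1 by blast+
  have F2: "axis 2 \<subseteq> fixed_chars \<phi> \<longleftrightarrow> \<not> pu2" "axis 2 \<subseteq> fixed_chars (endo_comp \<phi> \<phi>)"
    using G2 A2 by blast+
  have F3: "axis 3 \<subseteq> fixed_chars \<phi> \<longleftrightarrow> \<not> pu3" "axis 3 \<subseteq> fixed_chars (endo_comp \<phi> \<phi>)"
    using G3 A3 by blast+
  have rel: "pu3 \<longleftrightarrow> \<not> (pu1 \<longleftrightarrow> pu2)"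
    using sign_rel[of "ab11 \<phi>" "ab22 \<phi>" "ab12 \<phi>" "ab21 \<phi>"] orient o11 o22 H1_mod2(2,3) A1(3) A2(3) A3(3)
    by (simp add: ab_det_def)
  have S: "{i \<in> {1, 2, 3::nat}. axis i \<subseteq> fixed_chars \<phi>} =
      (if pu1 then {} else {1}) \<union> (if pu2 then {} else {2}) \<union> (if pu3 then {} else {3})"
    using F1(1) F2(1) F3(1) by auto
  have "card {i \<in> {1, 2, 3::nat}. axis i \<subseteq> fixed_chars \<phi>} \<in> {1, 3}"
    unfolding S using rel by (cases pu1; cases pu2; cases pu3) auto
  moreover have "\<forall>i \<in> {1, 2, 3::nat}. axis i \<subseteq> fixed_chars (endo_comp \<phi> \<phi>)"
    using F1(2) F2(2) F3(2) by auto
  ultimately show ?thesis by blast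
qed

end
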